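(* Let $\omega=\frac{-1+\sqrt{-3}}{2}$. (1) $\{\operatorname{Tr} M : M\in G_q(\omega)\}=\{0,\ \pm\omega^j,\ \pm 2\omega^j : j=0,1,2\}$. (2) For $M_q\in G_q$, let $f(q)=\operatorname{Tr} M_q\in\mathbb{Z}[q,q^{-1}]$. Then the following are equivalent: $f(1)$ is a multiple of $3$; $f(\omega)=0$; $f(q)$ is divisible by $[3]_q=q^2+q+1$.
   Context: Let $q$ be a formal parameter and let $R_q=\begin{pmatrix} q & 1\\ 0 & 1\end{pmatrix}$, $S_q=\begin{pmatrix} 0 & -q^{-1}\\ 1 & 0\end{pmatrix}\in \mathrm{GL}(2,\mathbb{Z}[q,q^{-1}])$. Let $G_q=\langle R_q,S_q\rangle$ be the group they generate. For $\zeta\in\mathbb{C}^*$, set $G_q(\zeta)=\{M_q|_{q=\zeta} : M_q\in G_q\}\subset \mathrm{GL}(2,\mathbb{C})$. *)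

theory Defs
  imports "HOL-Analysis.Analysis" "HOL-Computational_Algebra.Polynomial"
begin

definition mat2 :: "'a \<Rightarrow> 'a \<Rightarrow> 'a \<Rightarrow> 'a \<Rightarrow> 'a^2^2" where
  "mat2 a b c d = (\<chi> i j. if i = 1 then (if j = 1 then a else b) else (if j = 1 then c else d))"

definition tr2 :: "'a::semiring_1^2^2 \<Rightarrow> 'a" where
  "tr2 M = M $ 1 $ 1 + M $ 2 $ 2"

text \<open>Laurent polynomials in Z[q,q^-1] are represented as pairs (k, p) standing for
  q^(-k) * p(q) with p an integer polynomial.  A matrix over Z[q,q^-1] is represented as
  (k, P) standing for q^(-k) * P with P a 2x2 matrix over int poly.\<close>

type_synonym lmat = "nat \<times> (int poly^2^2)"
type_synonym lpoly = "nat \<times> int poly"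

definition lmult :: "lmat \<Rightarrow> lmat \<Rightarrow> lmat" where
  "lmult M N = (fst M + fst N, snd M ** snd N)"

definition R_q :: lmat where
  "R_q = (0, mat2 [:0,1:] 1 0 1)"

definition S_q :: lmat where
  "S_q = (1, mat2 0 (-1) [:0,1:] 0)"

definition R_q_inv :: lmat where
  "R_q_inv = (1, mat2 1 (-1) 0 [:0,1:])"

definition S_q_inv :: lmat where
  "S_q_inv = (0, mat2 0 1 [:0,-1:] 0)"

inductive_set G_q :: "lmat set" where
  G_q_one: "(0, mat 1) \<in> G_q"
| G_q_step: "M \<in> G_q \<Longrightarrow> g \<in> {R_q, S_q, R_q_inv, S_q_inv} \<Longrightarrow> lmult M g \<in> G_q"

definition leval :: "complex \<Rightarrow> lpoly \<Rightarrow> complex" where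
  "leval z f = poly (map_poly of_int (snd f)) z / z ^ fst f"

definition lmat_eval :: "complex \<Rightarrow> lmat \<Rightarrow> complex^2^2" where
  "lmat_eval z M = (\<chi> i j. leval z (fst M, snd M $ i $ j))"

definition G_q_at :: "complex \<Rightarrow> (complex^2^2) set" where
  "G_q_at z = lmat_eval z ` G_q"

definition ltrace :: "lmat \<Rightarrow> lpoly" where
  "ltrace M = (fst M, tr2 (snd M))"

text \<open>Divisibility in Z[q,q^-1]: q^-k a divides q^-l b iff b q^-l = a q^-k * h q^-m
  for some integer polynomial h and m, i.e. q^(k+m) b = q^l a h.\<close>

definition ldvd :: "lpoly \<Rightarrow> lpoly \<Rightarrow> bool" where
  "ldvd f g \<longleftrightarrow> (\<exists>h m. monom 1 (fst f + m) * snd g = monom 1 (fst g) * snd f * h)"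

definition qint3 :: lpoly where
  "qint3 = (0, [:1,1,1:])"

definition omega :: complex where
  "omega = (-1 + \<i> * sqrt 3) / 2"

end

theory Submission
  imports Defs
begin

definition ip :: "complex \<Rightarrow> int poly \<Rightarrow> complex" where
  "ip z p = poly (map_poly of_int p) z"

lemma ip_0[simp]: "ip z 0 = 0" by (simp add: ip_def)

lemma ip_pCons[simp]: "ip z (pCons a p) = of_int a + z * ip z p"
  by (simp add: ip_def map_poly_pCons)

lemma ip_1[simp]: "ip z 1 = 1"
  by (simp add: one_pCons)

lemma ip_add[simp]: "ip z (p + q) = ip z p + ip z q"
proof (induction p arbitrary: q)
  case 0 then show ?case by simp
next
  case (pCons a p)
  obtain b r where q: "q = pCons b r" by (cases q)
  show ?case by (simp add: q pCons.IH algebra_simps)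
qed

lemma ip_uminus[simp]: "ip z (- p) = - ip z p"
  by (induction p) (simp_all add: algebra_simps)

lemma ip_smult[simp]: "ip z (smult a p) = of_int a * ip z p"
  by (induction p) (simp_all add: algebra_simps)

lemma ip_mult[simp]: "ip z (p * q) = ip z p * ip z q"
  by (induction p) (simp_all add: algebra_simps)

lemma ip_sum[simp]: "ip z (sum f A) = (\<Sum>x\<in>A. ip z (f x))"
  by (induction A rule: infinite_finite_induct) simp_all

lemma ip_monom: "ip z (monom 1 m) = z ^ m"
  by (induction m) (simp_all add: monom_Suc monom_0 one_pCons)

lemma ip_of_int: "ip (of_int x) p = of_int (poly p x)"
  by (induction p) simp_all

lemma omega2: "omega ^ 2 = -1 - omega"
  by (simp add: omega_def complex_eq_iff power2_eq_square field_simps)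

lemma omega_nz[simp]: "omega \<noteq> 0"
  using omega2 by auto

lemma omega_inv: "1 / omega = -1 - omega"
proof -
  have "omega * (-1 - omega) = - omega - omega^2" by (simp add: algebra_simps power2_eq_square)
  also have "\<dots> = 1" by (simp add: omega2)
  finally have "omega * (-1 - omega) = 1" .
  then show ?thesis by (simp add: field_simps)
qed

type_synonym eis = "int \<times> int"
type_synonym emat = "eis \<times> eis \<times> eis \<times> eis"

definition eev :: "eis \<Rightarrow> complex" where
  "eev x = of_int (fst x) + of_int (snd x) * omega"

fun emul :: "eis \<Rightarrow> eis \<Rightarrow> eis" where
  "emul (a,b) (c,d) = (a*c-b*d, a*d+b*c-b*d)"

fun eadd :: "eis \<Rightarrow> eis \<Rightarrow> eis" where
  "eadd (a,b) (c,d) = (a+c, b+d)"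

fun mmul :: "emat \<Rightarrow> emat \<Rightarrow> emat" where
  "mmul (a,b,c,d) (e,f,g,h) = (eadd (emul a e) (emul b g), eadd (emul a f) (emul b h),
     eadd (emul c e) (emul d g), eadd (emul c f) (emul d h))"

fun etr :: "emat \<Rightarrow> eis" where
  "etr (a,b,c,d) = eadd a d"

fun emev :: "emat \<Rightarrow> complex^2^2" where
  "emev (a,b,c,d) = mat2 (eev a) (eev b) (eev c) (eev d)"

lemma eev_mul: "eev (emul x y) = eev x * eev y"
proof -
  obtain a b c d where "x = (a,b)" "y = (c,d)" by fastforce
  have z: "1 + omega + omega^2 = 0" using omega2 by simp
  have "of_int b * of_int d * (1 + omega + omega^2) = 0" using z by simp
  then show ?thesis using \<open>x = (a,b)\<close> \<open>y = (c,d)\<close>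
    by (simp add: eev_def algebra_simps power2_eq_square)
qed

lemma eev_add: "eev (eadd x y) = eev x + eev y"
  by (cases x; cases y) (simp add: eev_def algebra_simps)

lemma mat2_mult: "(mat2 a b c d ** mat2 e f g h :: complex^2^2) =
   mat2 (a*e+b*g) (a*f+b*h) (c*e+d*g) (c*f+d*h)"
  by (simp add: vec_eq_iff forall_2 sum_2 matrix_matrix_mult_def mat2_def)

lemma emev_mul: "emev (mmul A B) = emev A ** emev B"
proof -
  obtain a b c d where A: "A = (a,b,c,d)" by (metis prod_cases4)
  obtain e f g h where B: "B = (e,f,g,h)" by (metis prod_cases4)
  show ?thesis by (simp add: A B mat2_mult eev_mul eev_add del: emul.simps eadd.simps)
qed

lemma tr_emev: "tr2 (emev A) = eev (etr A)"
proof -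
  obtain a b c d where A: "A = (a,b,c,d)" by (metis prod_cases4)
  show ?thesis by (simp add: A tr2_def mat2_def eev_add del: eadd.simps)
qed

lemma Re_omega: "Re omega = -1/2" by (simp add: omega_def)
lemma Im_omega: "Im omega = sqrt 3 / 2" by (simp add: omega_def)

lemma eev_inj: "eev x = eev y \<Longrightarrow> x = y"
proof -
  assume e: "eev x = eev y"
  obtain a b where x: "x = (a,b)" by fastforce
  obtain c d where y: "y = (c,d)" by fastforce
  have "Im (eev x) = Im (eev y)" "Re (eev x) = Re (eev y)" using e by simp_all
  then have "of_int b * sqrt 3 / 2 = of_int d * sqrt 3 / 2" "of_int a - of_int b / 2 = (of_int c - of_int d / 2 :: real)"
    by (simp_all add: x y eev_def Re_omega Im_omega)
  then have "b = d" "a = c" by simp_all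
  then show ?thesis by (simp add: x y)
qed

lemma lmat_eval_mult:
  assumes "z \<noteq> 0"
  shows "lmat_eval z (lmult M N) = lmat_eval z M ** lmat_eval z N"
proof -
  have "lmat_eval z (lmult M N) $ i $ j = (lmat_eval z M ** lmat_eval z N) $ i $ j" for i j
  proof -
    have l: "lmat_eval z (lmult M N) $ i $ j = (ip z (snd M $ i $ 1) * ip z (snd N $ 1 $ j)
       + ip z (snd M $ i $ 2) * ip z (snd N $ 2 $ j)) / (z ^ fst M * z ^ fst N)"
      by (simp add: lmat_eval_def lmult_def leval_def matrix_matrix_mult_def sum_2 power_add
          flip: ip_def)
    have r: "(lmat_eval z M ** lmat_eval z N) $ i $ j = ip z (snd M $ i $ 1) / z ^ fst M * (ip z (snd N $ 1 $ j) / z ^ fst N)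
       + ip z (snd M $ i $ 2) / z ^ fst M * (ip z (snd N $ 2 $ j) / z ^ fst N)"
      by (simp add: lmat_eval_def leval_def matrix_matrix_mult_def sum_2 flip: ip_def)
    show ?thesis unfolding l r using assms by (simp add: field_simps)
  qed
  then show ?thesis by (simp add: vec_eq_iff)
qed

definition gl :: "lmat list" where "gl = [R_q, S_q, R_q_inv, S_q_inv]"
definition el :: "emat list" where
  "el = [((0,1),(1,0),(0,0),(1,0)), ((0,0),(1,1),(1,0),(0,0)),
         ((-1,-1),(1,1),(0,0),(1,0)), ((0,0),(1,0),(0,-1),(0,0))]"

definition eI :: emat where "eI = ((1,0),(0,0),(0,0),(1,0))"

lemma lmat_eval_mat2: "lmat_eval z (k, mat2 a b c d) = mat2 (leval z (k,a)) (leval z (k,b)) (leval z (k,c)) (leval z (k,d))"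
  by (simp add: lmat_eval_def mat2_def vec_eq_iff)

lemma mat1_mat2: "(mat 1 :: 'a::zero_neq_one^2^2) = mat2 1 0 0 1"
  by (simp add: mat_def mat2_def vec_eq_iff forall_2)

lemma leval_ip: "leval z (k, p) = ip z p / z ^ k"
  by (simp add: leval_def ip_def)

lemma eval_one: "lmat_eval omega (0, mat 1) = emev eI"
  by (simp only: mat1_mat2 lmat_eval_mat2 leval_ip eI_def emev.simps) (simp add: eev_def)

lemma omega_minv: "-1 / omega = 1 + omega"
proof -
  have "-1 / omega = - (1 / omega)" by simp
  also have "\<dots> = 1 + omega" by (simp add: omega_inv)
  finally show ?thesis .
qed

lemma eev_vals: "eev (0,0) = 0" "eev (1,0) = 1" "eev (1,1) = 1 + omega" "eev (0,1) = omega"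
  "eev (-1,-1) = -1 - omega" "eev (0,-1) = - omega"
  by (simp_all add: eev_def)

lemma ev_R: "lmat_eval omega R_q = emev ((0,1),(1,0),(0,0),(1,0))"
  unfolding R_q_def lmat_eval_mat2 leval_ip emev.simps eev_vals by simp
lemma ev_S: "lmat_eval omega S_q = emev ((0,0),(1,1),(1,0),(0,0))"
  unfolding S_q_def lmat_eval_mat2 leval_ip emev.simps eev_vals by (simp add: omega_inv add.commute)
lemma ev_Ri: "lmat_eval omega R_q_inv = emev ((-1,-1),(1,1),(0,0),(1,0))"
  unfolding R_q_inv_def lmat_eval_mat2 leval_ip emev.simps eev_vals by (simp add: omega_minv omega_inv add.commute)
lemma ev_Si: "lmat_eval omega S_q_inv = emev ((0,0),(1,0),(0,-1),(0,0))"
  unfolding S_q_inv_def lmat_eval_mat2 leval_ip emev.simps eev_vals by simp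

lemma eval_gen:
  assumes "i < 4" shows "lmat_eval omega (gl ! i) = emev (el ! i)"
proof -
  have "i = 0 \<or> i = 1 \<or> i = 2 \<or> i = 3" using assms by auto
  then show ?thesis
    by (elim disjE) (simp_all add: gl_def el_def ev_R ev_S ev_Ri ev_Si numeral_eq_Suc del: emev.simps)
qed

lemma set_gl: "set gl = {R_q, S_q, R_q_inv, S_q_inv}" by (simp add: gl_def)
lemma len_gl: "length gl = 4" by (simp add: gl_def)
lemma len_el: "length el = 4" by (simp add: el_def)

lemma gl_in: "g \<in> {R_q, S_q, R_q_inv, S_q_inv} \<Longrightarrow> \<exists>i<4. g = gl ! i"
  by (metis set_gl len_gl in_set_conv_nth)

definition XL :: "emat list" where
  "XL = [
   ((1,0),(0,0),(0,0),(1,0)),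
    ((0,1),(1,0),(0,0),(1,0)),
    ((0,0),(1,1),(1,0),(0,0)),
    ((-1,-1),(1,1),(0,0),(1,0)),
    ((0,0),(1,0),(0,-1),(0,0)),
    ((1,0),(-1,0),(1,0),(0,0)),
    ((0,-1),(0,1),(0,-1),(0,0)),
    ((0,0),(1,1),(0,1),(1,0)),
    ((1,1),(0,0),(0,0),(1,1)),
    ((0,0),(1,1),(-1,-1),(1,1)),
    ((1,1),(0,-1),(1,0),(0,0)),
    ((1,0),(-1,-1),(0,-1),(0,0)),
    ((0,0),(1,0),(1,1),(0,-1)),
    ((0,0),(1,0),(-1,0),(1,0)),
    ((0,-1),(0,0),(0,0),(0,-1)),
    ((0,1),(0,0),(0,1),(1,0)),
    ((-1,0),(1,1),(0,0),(1,1)),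
    ((-1,-1),(0,1),(-1,-1),(1,1)),
    ((1,1),(0,0),(1,1),(0,-1)),
    ((-1,0),(1,1),(-1,0),(1,0)),
    ((1,1),(0,-1),(0,0),(0,-1)),
    ((1,1),(0,0),(1,0),(-1,0)),
    ((1,0),(0,0),(0,-1),(0,1)),
    ((0,0),(0,1),(1,1),(0,0)),
    ((0,-1),(0,1),(0,0),(1,1)),
    ((1,0),(0,0),(1,0),(-1,-1)),
    ((-1,0),(1,0),(0,1),(1,0)),
    ((0,-1),(0,0),(-1,-1),(1,1)),
    ((0,1),(0,-1),(1,1),(0,-1)),
    ((-1,-1),(0,0),(-1,0),(1,0)),
    ((-1,0),(1,0),(0,0),(0,-1)),
    ((0,-1),(0,0),(0,-1),(-1,0)),
    ((0,0),(0,-1),(-1,-1),(0,0)),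
    ((0,0),(-1,0),(1,0),(-1,0)),
    ((0,0),(0,1),(0,-1),(0,1)),
    ((1,1),(-1,-1),(1,1),(0,0)),
    ((1,1),(-1,-1),(1,0),(-1,-1)),
    ((1,0),(-1,0),(0,-1),(-1,0)),
    ((-1,-1),(1,1),(-1,-1),(0,0)),
    ((-1,0),(1,1),(0,1),(0,0)),
    ((0,0),(0,1),(-1,0),(1,1)),
    ((0,-1),(0,1),(-1,-1),(0,1)),
    ((0,1),(1,0),(1,1),(0,0)),
    ((-1,-1),(1,1),(-1,0),(1,1)),
    ((0,1),(0,0),(0,0),(0,1)),
    ((0,1),(1,0),(0,1),(0,-1)),
    ((1,0),(-1,-1),(1,0),(-1,0)),
    ((0,-1),(-1,0),(0,-1),(0,1)),
    ((0,0),(0,-1),(1,0),(-1,-1)),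
    ((0,0),(-1,-1),(0,-1),(-1,0)),
    ((0,-1),(-1,0),(-1,-1),(0,0)),
    ((1,1),(0,-1),(1,1),(-1,-1)),
    ((-1,0),(1,0),(-1,0),(0,0)),
    ((0,0),(0,-1),(0,1),(0,-1)),
    ((-1,-1),(0,0),(0,0),(-1,-1)),
    ((0,0),(-1,0),(0,1),(0,0)),
    ((-1,0),(0,0),(-1,0),(1,1)),
    ((0,0),(-1,0),(-1,-1),(0,1)),
    ((-1,-1),(0,1),(0,0),(0,1)),
    ((-1,0),(0,0),(0,1),(0,-1)),
    ((0,1),(0,0),(1,1),(-1,-1)),
    ((-1,-1),(0,1),(-1,0),(0,0)),
    ((1,0),(-1,-1),(0,0),(-1,-1)),
    ((1,1),(-1,-1),(0,0),(-1,0)),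
    ((1,0),(-1,0),(0,0),(0,1)),
    ((0,1),(0,-1),(0,1),(0,0)),
    ((-1,-1),(0,0),(-1,-1),(0,1)),
    ((0,0),(-1,-1),(1,1),(-1,-1)),
    ((0,0),(-1,-1),(-1,0),(0,0)),
    ((0,1),(0,-1),(0,0),(-1,-1)),
    ((0,-1),(-1,0),(0,0),(-1,0)),
    ((-1,0),(0,0),(0,0),(-1,0))]"

definition TS :: "eis list" where
  "TS = [(2,0),(1,1),(0,0),(0,-1),(1,0),(2,2),(0,-2),(0,1),(-1,-1),(-1,0),(0,2),(-2,-2),(-2,0)]"

definition WL :: "(eis \<times> nat list) list" where
  "WL = [((2,0),[]),((1,1),[0]),((0,0),[1]),((0,-1),[2]),((1,0),[0,1]),((2,2),[1,1]),
     ((0,-2),[3,3]),((0,1),[0,1,1]),((-1,-1),[2,3,3]),((-1,0),[0,1,0,1]),((0,2),[1,1,1,1]),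
     ((-2,-2),[3,3,3,3]),((-2,0),[0,1,0,1,0,1])]"

lemma closure_code: "list_all (\<lambda>A. list_all (\<lambda>E. mmul A E \<in> set XL) el) XL"
  by code_simp

lemma trace_code: "list_all (\<lambda>A. etr A \<in> set TS) XL"
  by code_simp

lemma WL_code: "map fst WL = TS \<and> list_all (\<lambda>(t,ws). list_all (\<lambda>i. i < 4) ws \<and>
   etr (foldl (\<lambda>A i. mmul A (el ! i)) eI ws) = t) WL"
  by code_simp

lemma eI_in: "eI \<in> set XL" by code_simp

lemma closure: "A \<in> set XL \<Longrightarrow> i < 4 \<Longrightarrow> mmul A (el ! i) \<in> set XL"
  using closure_code len_el by (simp add: list_all_iff)

lemma main_inv: "M \<in> G_q \<Longrightarrow> \<exists>A\<in>set XL. lmat_eval omega M = emev A"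
proof (induction rule: G_q.induct)
  case G_q_one
  then show ?case using eI_in eval_one by blast
next
  case (G_q_step M g)
  obtain A where A: "A \<in> set XL" "lmat_eval omega M = emev A" using G_q_step.IH by blast
  obtain i where i: "i < 4" "g = gl ! i" using gl_in G_q_step.hyps(2) by blast
  have "lmat_eval omega (lmult M g) = emev (mmul A (el ! i))"
    using A i by (simp add: lmat_eval_mult eval_gen emev_mul del: emev.simps mmul.simps)
  then show ?case using closure A i by blast
qed

lemma words: "\<forall>i\<in>set ws. i < 4 \<Longrightarrow> M \<in> G_q \<Longrightarrow> lmat_eval omega M = emev A \<Longrightarrow>
  foldl (\<lambda>M i. lmult M (gl ! i)) M ws \<in> G_q \<and>
  lmat_eval omega (foldl (\<lambda>M i. lmult M (gl ! i)) M ws) = emev (foldl (\<lambda>A i. mmul A (el ! i)) A ws)"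
proof (induction ws arbitrary: M A)
  case Nil then show ?case by simp
next
  case (Cons i ws)
  have i: "i < 4" using Cons.prems by simp
  have g: "gl ! i \<in> {R_q, S_q, R_q_inv, S_q_inv}" using i len_gl set_gl nth_mem by metis
  have "lmult M (gl ! i) \<in> G_q" using G_q_step[OF Cons.prems(2) g] .
  moreover have "lmat_eval omega (lmult M (gl ! i)) = emev (mmul A (el ! i))"
    using Cons.prems i by (simp add: lmat_eval_mult eval_gen emev_mul del: emev.simps mmul.simps)
  ultimately show ?case using Cons.IH Cons.prems(1) by simp
qed

lemma traces_eq: "{tr2 M | M. M \<in> G_q_at omega} = eev ` set TS"
proof
  show "{tr2 M | M. M \<in> G_q_at omega} \<subseteq> eev ` set TS"
  proof
    fix t assume "t \<in> {tr2 M | M. M \<in> G_q_at omega}"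
    then obtain N where N: "N \<in> G_q" "t = tr2 (lmat_eval omega N)"
      unfolding G_q_at_def by blast
    obtain A where A: "A \<in> set XL" "lmat_eval omega N = emev A" using main_inv N(1) by blast
    have "etr A \<in> set TS" using trace_code A(1) by (simp add: list_all_iff)
    then show "t \<in> eev ` set TS" using N A tr_emev by simp
  qed
next
  show "eev ` set TS \<subseteq> {tr2 M | M. M \<in> G_q_at omega}"
  proof
    fix t assume "t \<in> eev ` set TS"
    then obtain u where u: "u \<in> set TS" "t = eev u" by blast
    then obtain ws where ws: "(u, ws) \<in> set WL" using WL_code
      by (metis (no_types, lifting) imageE list.set_map prod.collapse)
    have h: "list_all (\<lambda>i. i < 4) ws" "etr (foldl (\<lambda>A i. mmul A (el ! i)) eI ws) = u"
      using WL_code ws by (auto simp: list_all_iff)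
    have w: "foldl (\<lambda>M i. lmult M (gl ! i)) (0, mat 1) ws \<in> G_q \<and>
      lmat_eval omega (foldl (\<lambda>M i. lmult M (gl ! i)) (0, mat 1) ws) = emev (foldl (\<lambda>A i. mmul A (el ! i)) eI ws)"
      using words[of ws "(0, mat 1)" eI] h(1) G_q_one eval_one by (simp add: list_all_iff del: emev.simps)
    then have "emev (foldl (\<lambda>A i. mmul A (el ! i)) eI ws) \<in> G_q_at omega"
      unfolding G_q_at_def by (metis image_eqI)
    moreover have "t = tr2 (emev (foldl (\<lambda>A i. mmul A (el ! i)) eI ws))"
      using u h(2) tr_emev by simp
    ultimately show "t \<in> {tr2 M | M. M \<in> G_q_at omega}" by blast
  qed
qed

lemma target_eq: "{0} \<union> {s * omega ^ j | s j. s \<in> {1, -1, 2, -2} \<and> j \<in> {0, 1, 2::nat}} = eev ` set TS"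
proof -
  have C: "{s * omega ^ j | s j. s \<in> {1, -1, 2, -2} \<and> j \<in> {0, 1, 2::nat}} =
     (\<Union>s\<in>{1, -1, 2, -2}. \<Union>j\<in>{0, 1, 2::nat}. {s * omega ^ j})" by blast
  have e: "eev (2,0) = 2" "eev (1,1) = - (omega^2)" "eev (0,0) = 0" "eev (0,-1) = - omega"
    "eev (1,0) = 1" "eev (2,2) = - (2 * omega^2)" "eev (0,-2) = - (2 * omega)" "eev (0,1) = omega"
    "eev (-1,-1) = omega^2"
    "eev (-1,0) = -1" "eev (0,2) = 2 * omega" "eev (-2,-2) = 2 * omega^2" "eev (-2,0) = -2"
    by (simp_all add: eev_def omega2)
  have R: "eev ` set TS = {2, - (omega^2), 0, - omega, 1, - (2 * omega^2), - (2 * omega), omega, omega^2,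
     -1, 2 * omega, 2 * omega^2, -2}"
    unfolding TS_def by (simp only: list.set image_insert image_empty e)
  have L: "(\<Union>s\<in>{1, -1, 2, -2}. \<Union>j\<in>{0, 1, 2::nat}. {s * omega ^ j}) =
     {- (2 * omega^2), - (2 * omega), -2, 2 * omega^2, 2 * omega, 2, - (omega^2), - omega, -1, omega^2, omega, 1}"
    by (simp only: UN_insert UN_empty Un_empty_right) simp
  show ?thesis unfolding C L R by auto
qed

lemma omega_times: "omega * eev (x, y) = eev (- y, x - y)"
proof -
  have "omega * eev (x,y) = of_int x * omega + of_int y * omega^2"
    by (simp add: eev_def algebra_simps power2_eq_square)
  also have "\<dots> = eev (- y, x - y)" by (simp add: omega2 eev_def algebra_simps)
  finally show ?thesis .
qed

lemma ip_eis: "\<exists>a b. ip omega p = eev (a,b) \<and> (3::int) dvd (poly p 1 - a - b)"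
proof (induction p)
  case 0 then show ?case by (intro exI[of _ 0]) (simp add: eev_def)
next
  case (pCons c p)
  then obtain a b k where ab: "ip omega p = eev (a,b)" "poly p 1 - a - b = 3 * k"
    by (metis dvd_def)
  have "ip omega (pCons c p) = eev (c - b, a - b)"
    using omega_times[of a b] by (simp add: ab eev_def)
  moreover have "poly (pCons c p) 1 - (c - b) - (a - b) = 3 * (k + b)" using ab(2) by simp
  ultimately show ?case by (metis dvd_triv_left)
qed

lemma leval_eis: "\<exists>a b. leval omega (k, p) = eev (a,b) \<and> (3::int) dvd (poly p 1 - a - b)"
proof (induction k)
  case 0 then show ?case using ip_eis[of p] by (simp add: leval_ip)
next
  case (Suc k)
  then obtain a b j where ab: "leval omega (k, p) = eev (a,b)" "poly p 1 - a - b = 3 * j"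
    by (metis dvd_def)
  have "eev (a,b) = omega * eev (b - a, - a)" by (simp add: omega_times)
  then have "leval omega (Suc k, p) = eev (b - a, - a)"
    using ab(1) by (simp add: leval_ip field_simps)
  moreover have "poly p 1 - (b - a) - (- a) = 3 * (j + a)" using ab(2) by simp
  ultimately show ?case by (metis dvd_triv_left)
qed

lemma div3: "\<exists>g r0 r1. (p::int poly) = [:1,1,1:] * g + [:r0, r1:]"
proof (induction p)
  case 0 then show ?case by (intro exI[of _ 0]) simp
next
  case (pCons c p)
  then obtain g r0 r1 where p: "p = [:1,1,1:] * g + [:r0, r1:]" by blast
  have "poly (pCons c p) x = poly ([:1,1,1:] * (pCons 0 g + [:r1:]) + [:c - r1, r0 - r1:]) x" for x
    by (simp add: p algebra_simps)
  then have "pCons c p = [:1,1,1:] * (pCons 0 g + [:r1:]) + [:c - r1, r0 - r1:]"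
    using poly_eq_poly_eq_iff by blast
  then show ?case by blast
qed

lemma ip_Phi: "ip omega [:1,1,1:] = 0"
  using omega2 by (simp add: algebra_simps power2_eq_square)

lemma part2:
  assumes M: "M \<in> G_q"
  shows "let f = ltrace M in
           ((\<exists>m::int. leval 1 f = of_int (3 * m)) \<longleftrightarrow> leval omega f = 0)
         \<and> (leval omega f = 0 \<longleftrightarrow> ldvd qint3 f)"
proof -
  define k where "k = fst M"
  define p where "p = tr2 (snd M)"
  have f: "ltrace M = (k, p)" by (simp add: ltrace_def k_def p_def)
  obtain a b where ab: "leval omega (k, p) = eev (a,b)" "(3::int) dvd (poly p 1 - a - b)"
    using leval_eis by blast
  have tr: "leval omega (k, p) = tr2 (lmat_eval omega M)"
    by (simp add: k_def p_def tr2_def lmat_eval_def leval_ip add_divide_distrib)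
  have "tr2 (lmat_eval omega M) \<in> eev ` set TS"
    using traces_eq M unfolding G_q_at_def by blast
  then obtain u where u: "u \<in> set TS" "eev (a,b) = eev u" using ab(1) tr by auto
  then have abT: "(a,b) \<in> set TS" using eev_inj by metis
  have l1: "leval 1 (k, p) = of_int (poly p 1)"
    using ip_of_int[of 1 p] by (simp add: leval_ip)
  have z: "leval omega (k,p) = 0 \<longleftrightarrow> a = 0 \<and> b = 0"
    using ab(1) eev_inj eev_vals(1) by (metis prod.inject)
  have c1: "(\<exists>m::int. leval 1 (k,p) = of_int (3 * m)) \<longleftrightarrow> (3::int) dvd poly p 1"
    unfolding l1 of_int_eq_iff by (auto simp: dvd_def)
  have c2: "(3::int) dvd poly p 1 \<longleftrightarrow> (3::int) dvd (a + b)"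
    using ab(2) by (metis add.commute diff_diff_eq dvd_add_right_iff diff_add_cancel)
  have c3: "(3::int) dvd (a + b) \<longleftrightarrow> a = 0 \<and> b = 0"
    using abT unfolding TS_def by auto
  have ipz: "leval omega (k,p) = 0 \<longleftrightarrow> ip omega p = 0"
    by (simp add: leval_ip)
  have d: "ip omega p = 0 \<longleftrightarrow> ldvd qint3 (k, p)"
  proof
    assume h: "ip omega p = 0"
    obtain g r0 r1 where p: "p = [:1,1,1:] * g + [:r0, r1:]" using div3 by blast
    have "ip omega p = ip omega [:1,1,1:] * ip omega g + eev (r0, r1)"
      unfolding p ip_add ip_mult by (simp add: eev_def mult.commute)
    then have "eev (r0, r1) = eev (0,0)" using h by (simp only: ip_Phi eev_vals) simp
    then have "r0 = 0" "r1 = 0" using eev_inj by auto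
    then have pe: "p = [:1,1,1:] * g" using p by simp
    have "monom 1 (0 + k) * p = monom 1 k * [:1,1,1:] * g" by (simp only: pe add_0 mult.assoc)
    then show "ldvd qint3 (k, p)" unfolding ldvd_def qint3_def by auto
  next
    assume "ldvd qint3 (k, p)"
    then obtain h m where "monom 1 m * p = monom 1 k * [:1,1,1:] * h"
      unfolding ldvd_def qint3_def by auto
    then have "ip omega (monom 1 m * p) = ip omega (monom 1 k * [:1,1,1:] * h)" by simp
    then have "omega ^ m * ip omega p = omega ^ k * ip omega [:1,1,1:] * ip omega h"
      by (simp only: ip_mult ip_monom)
    then have "omega ^ m * ip omega p = 0" by (simp only: ip_Phi) simp
    then show "ip omega p = 0" by simp
  qed
  show ?thesis unfolding f Let_def using c1 c2 c3 z ipz d by blast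
qed

theorem corollary3p2:
  shows "{tr2 M | M. M \<in> G_q_at omega} =
           {0} \<union> {s * omega ^ j | s j. s \<in> {1, -1, 2, -2} \<and> j \<in> {0, 1, 2::nat}}
       \<and> (\<forall>M \<in> G_q. let f = ltrace M in
           ((\<exists>m::int. leval 1 f = of_int (3 * m)) \<longleftrightarrow> leval omega f = 0)
         \<and> (leval omega f = 0 \<longleftrightarrow> ldvd qint3 f))"
  using traces_eq target_eq part2 by simp

end
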